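(* Let $X=(V,E,T)$ be a $2$-dimensional $(k_0,k_1)$-regular $(\epsilon,\mu)$-cosystolic expander, and suppose $|V|$ is sufficiently large, i.e. $|V|\ge N$ for a threshold $N$ depending only on $\mu$. Then for any subset of edges $F\subseteq E$ and any vertex $v\in V$, $\mathrm{dist}(F_v, Z^1(X)\setminus B^1(X))\ge \frac{k_0}{2}$.
   Context: A $2$-dimensional simplicial complex $X=(V,E,T)$ consists of a finite vertex set $V$, a set $E$ of $2$-element subsets of $V$ and a set $T$ of $3$-element subsets of $V$ such that every $2$-element subset of a triangle lies in $E$. $X$ is $(k_0,k_1)$-regular if every vertex lies in exactly $k_0$ edges and every edge lies in exactly $k_1$ triangles. For $S\subseteq V$, $\delta(S)$ is the set of edges with exactly one endpoint in $S$; for $F\subseteq E$, $\delta(F)$ is the set of triangles containing an odd number of edges of $F$. $B^0(X)=\{\emptyset,V\}$, $Z^0(X)=\{S\subseteq V:\delta(S)=\emptyset\}$, $B^1(X)=\{\delta(S):S\subseteq V\}$, $Z^1(X)=\{F\subseteq E:\delta(F)=\emptyset\}$. $\mathrm{dist}(A,B)=|A\setminus B|+|B\setminus A|$; distance to a family is the minimum over its members. With $X(0)=V$, $X(1)=E$, $X$ is an $(\epsilon,\mu)$-cosystolic expander ($\epsilon,\mu>0$) if for $i\in\{0,1\}$ and all $S\subseteq X(i)$: if $|\delta(S)|=0$ then $S\in B^i(X)$ or $|S|\ge\mu|X(i)|$; otherwise $|\delta(S)|/\mathrm{dist}(S,Z^i(X))\ge\epsilon k_i$. The local view of $v$ with respect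 to $F$ is $F_v=\{e\in F: v\in e\}$. *)

theory Defs
  imports Complex_Main
begin

definition simplicial_complex2 :: "'a set \<Rightarrow> 'a set set \<Rightarrow> 'a set set \<Rightarrow> bool" where
  "simplicial_complex2 V E T \<longleftrightarrow>
     finite V \<and>
     (\<forall>e\<in>E. e \<subseteq> V \<and> card e = 2) \<and>
     (\<forall>t\<in>T. t \<subseteq> V \<and> card t = 3) \<and>
     (\<forall>t\<in>T. \<forall>e. e \<subseteq> t \<and> card e = 2 \<longrightarrow> e \<in> E)"

definition regular_complex :: "'a set \<Rightarrow> 'a set set \<Rightarrow> 'a set set \<Rightarrow> nat \<Rightarrow> nat \<Rightarrow> bool" where
  "regular_complex V E T k0 k1 \<longleftrightarrow>
     (\<forall>v\<in>V. card {e\<in>E. v \<in> e} = k0) \<and>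
     (\<forall>e\<in>E. card {t\<in>T. e \<subseteq> t} = k1)"

definition cob0 :: "'a set set \<Rightarrow> 'a set \<Rightarrow> 'a set set" where
  "cob0 E S = {e\<in>E. card (e \<inter> S) = 1}"

definition cob1 :: "'a set set \<Rightarrow> 'a set set \<Rightarrow> 'a set set" where
  "cob1 T F = {t\<in>T. odd (card {e\<in>F. e \<subseteq> t})}"

definition B0 :: "'a set \<Rightarrow> 'a set set" where
  "B0 V = {{}, V}"

definition Z0 :: "'a set \<Rightarrow> 'a set set \<Rightarrow> 'a set set" where
  "Z0 V E = {S. S \<subseteq> V \<and> cob0 E S = {}}"

definition B1 :: "'a set \<Rightarrow> 'a set set \<Rightarrow> 'a set set set" where
  "B1 V E = cob0 E ` Pow V"

definition Z1 :: "'a set set \<Rightarrow> 'a set set \<Rightarrow> 'a set set set" where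
  "Z1 E T = {F. F \<subseteq> E \<and> cob1 T F = {}}"

definition symdist :: "'b set \<Rightarrow> 'b set \<Rightarrow> nat" where
  "symdist A B = card (A - B) + card (B - A)"

definition dist_fam :: "'b set \<Rightarrow> 'b set set \<Rightarrow> nat" where
  "dist_fam A Fam = Min (symdist A ` Fam)"

definition cosystolic_expander ::
  "'a set \<Rightarrow> 'a set set \<Rightarrow> 'a set set \<Rightarrow> nat \<Rightarrow> nat \<Rightarrow> real \<Rightarrow> real \<Rightarrow> bool" where
  "cosystolic_expander V E T k0 k1 \<epsilon> \<mu> \<longleftrightarrow>
     \<epsilon> > 0 \<and> \<mu> > 0 \<and>
     (\<forall>S. S \<subseteq> V \<longrightarrow>
        (card (cob0 E S) = 0 \<longrightarrow> S \<in> B0 V \<or> real (card S) \<ge> \<mu> * real (card V)) \<and>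
        (card (cob0 E S) \<noteq> 0 \<longrightarrow>
           real (card (cob0 E S)) / real (dist_fam S (Z0 V E)) \<ge> \<epsilon> * real k0)) \<and>
     (\<forall>S. S \<subseteq> E \<longrightarrow>
        (card (cob1 T S) = 0 \<longrightarrow> S \<in> B1 V E \<or> real (card S) \<ge> \<mu> * real (card E)) \<and>
        (card (cob1 T S) \<noteq> 0 \<longrightarrow>
           real (card (cob1 T S)) / real (dist_fam S (Z1 E T)) \<ge> \<epsilon> * real k1))"

definition local_view :: "'a set set \<Rightarrow> 'a \<Rightarrow> 'a set set" where
  "local_view F v = {e\<in>F. v \<in> e}"

end

theory Submission
  imports Defs
begin

lemma handshake:
  assumes sc: "simplicial_complex2 V E T" and rg: "regular_complex V E T k0 k1"
  shows "2 * card E = card V * k0"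
proof -
  have fV: "finite V" using sc by (simp add: simplicial_complex2_def)
  have EV: "\<forall>e\<in>E. e \<subseteq> V \<and> card e = 2" using sc by (simp add: simplicial_complex2_def)
  have fE: "finite E" using EV fV by (meson Pow_iff finite_Pow_iff rev_finite_subset subsetI)
  have deg: "\<forall>v\<in>V. card {e\<in>E. v \<in> e} = k0" using rg by (simp add: regular_complex_def)
  have "card V * k0 = (\<Sum>v\<in>V. card {e\<in>E. v \<in> e})" using deg by simp
  also have "\<dots> = (\<Sum>v\<in>V. \<Sum>e\<in>E. if v \<in> e then 1 else 0)"
    using fE by (simp add: sum.If_cases Int_def conj_commute)
  also have "\<dots> = (\<Sum>e\<in>E. \<Sum>v\<in>V. if v \<in> e then 1 else 0)" by (rule sum.swap)
  also have "\<dots> = (\<Sum>e\<in>E. card (V \<inter> e))" using fV by (simp add: sum.If_cases)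
  also have "\<dots> = (\<Sum>e\<in>E. 2)"
    by (rule sum.cong) (use EV in \<open>auto simp: Int_absorb1\<close>)
  finally show ?thesis by simp
qed

theorem lemma3p6:
  fixes \<mu> :: real
  assumes "\<mu> > 0"
  shows "\<exists>N::nat. \<forall>(V::'a set) E T k0 k1 \<epsilon>.
           simplicial_complex2 V E T \<and> regular_complex V E T k0 k1 \<and>
           cosystolic_expander V E T k0 k1 \<epsilon> \<mu> \<and> card V \<ge> N \<longrightarrow>
           (\<forall>F v. F \<subseteq> E \<and> v \<in> V \<longrightarrow>
              (\<forall>Z\<in>Z1 E T - B1 V E. real (symdist (local_view F v) Z) \<ge> real k0 / 2))"
proof (intro exI[of _ "nat \<lceil>3 / \<mu>\<rceil>"] allI impI ballI, elim conjE)
  fix V :: "'a set" and E T k0 k1 \<epsilon> F v Z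
  assume sc: "simplicial_complex2 V E T" and rg: "regular_complex V E T k0 k1"
    and ce: "cosystolic_expander V E T k0 k1 \<epsilon> \<mu>" and cV: "nat \<lceil>3 / \<mu>\<rceil> \<le> card V"
    and FE: "F \<subseteq> E" and vV: "v \<in> V" and Z: "Z \<in> Z1 E T - B1 V E"
  have fV: "finite V" using sc by (simp add: simplicial_complex2_def)
  have EV: "\<forall>e\<in>E. e \<subseteq> V \<and> card e = 2" using sc by (simp add: simplicial_complex2_def)
  have fE: "finite E" using EV fV by (meson Pow_iff finite_Pow_iff rev_finite_subset subsetI)
  have hs: "2 * real (card E) = real (card V) * real k0"
    using handshake[OF sc rg] by (metis of_nat_mult of_nat_numeral)
  have ZE: "Z \<subseteq> E" and cz: "cob1 T Z = {}" and ZB: "Z \<notin> B1 V E" using Z by (auto simp: Z1_def)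
  have bigZ: "real (card Z) \<ge> \<mu> * real (card E)" using ce ZE cz ZB
    unfolding cosystolic_expander_def by auto
  have "3 / \<mu> \<le> real (card V)" using cV
    by (metis le_nat_iff of_nat_le_iff real_nat_ceiling_ge order_trans)
  hence mV: "3 \<le> \<mu> * real (card V)" using assms by (simp add: field_simps)
  have "\<mu> * real (card E) = (\<mu> * real (card V)) * real k0 / 2" using hs by (simp add: field_simps)
  also have "\<dots> \<ge> 3 * real k0 / 2" using mV by (simp add: mult_right_mono divide_right_mono)
  finally have Zk: "real (card Z) \<ge> 3 * real k0 / 2" using bigZ by linarith
  have "local_view F v \<subseteq> {e\<in>E. v \<in> e}" using FE by (auto simp: local_view_def)
  hence "card (local_view F v) \<le> card {e\<in>E. v \<in> e}" using fE by (intro card_mono) auto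
  also have "\<dots> = k0" using rg vV by (simp add: regular_complex_def)
  finally have Lk: "card (local_view F v) \<le> k0" .
  have fZ: "finite Z" using ZE fE finite_subset by blast
  have "card Z \<le> card (Z - local_view F v) + card (local_view F v)"
  proof -
    have "Z \<subseteq> (Z - local_view F v) \<union> local_view F v" by blast
    hence "card Z \<le> card ((Z - local_view F v) \<union> local_view F v)"
      using fZ FE fE by (intro card_mono) (auto simp: local_view_def intro: finite_subset)
    also have "\<dots> \<le> card (Z - local_view F v) + card (local_view F v)" by (rule card_Un_le)
    finally show ?thesis .
  qed
  hence "real (card Z) \<le> real (symdist (local_view F v) Z) + real k0"
    using Lk unfolding symdist_def by linarith
  thus "real k0 / 2 \<le> real (symdist (local_view F v) Z)" using Zk by linarith
qed

end
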